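(* Let $U\in \mathbb{C}^{m\times p}$ and $V\in \mathbb{C}^{q\times m}$ be arbitrary matrices, and let $E=U(VU)^{\dagger}V$. Then $E$ is idempotent, and its range and null space are given by \[ R(E)=R(UU^{*}V^{*})=R(UU^{*}V^{*}V)=R(U)\cap \big((UU^{*})^{\dagger}(R(U)\cap N(V))\big)^{\perp}, \] \[ N(E)=N(U^{*}V^{*}V)=N(UU^{*}V^{*}V)=N(V)\oplus (V^{*}V)^{\dagger}\big(R(U)+N(V)\big)^{\perp}. \]
   Context: $A^{*}$ denotes the conjugate transpose of $A$; $A^{\dagger}$ denotes the Moore–Penrose inverse of $A$ (the unique $X$ with $AXA=A$, $XAX=X$, $(AX)^*=AX$, $(XA)^*=XA$). $R(A)$ and $N(A)$ are the range and null space of $A$. For a subspace $S\subseteq\mathbb{C}^m$, $S^{\perp}$ is its orthogonal complement with respect to the standard inner product, and for a matrix $B$, $BS=\{Bs:s\in S\}$. $\oplus$ denotes a direct sum of subspaces. *)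

theory Defs
  imports "HOL-Analysis.Analysis"
begin

text \<open>Complex matrices: an m x p matrix is complex ^ 'p ^ 'm (rows indexed by 'm).\<close>

definition ctrans :: "complex ^ 'n ^ 'm \<Rightarrow> complex ^ 'm ^ 'n" where
  "ctrans A = (\<chi> i j. cnj (A $ j $ i))"

definition is_mp_inverse :: "complex ^ 'n ^ 'm \<Rightarrow> complex ^ 'm ^ 'n \<Rightarrow> bool" where
  "is_mp_inverse A X \<longleftrightarrow>
     A ** X ** A = A \<and> X ** A ** X = X \<and>
     ctrans (A ** X) = A ** X \<and> ctrans (X ** A) = X ** A"

definition mp_inv :: "complex ^ 'n ^ 'm \<Rightarrow> complex ^ 'm ^ 'n" where
  "mp_inv A = (THE X. is_mp_inverse A X)"

definition col_space :: "complex ^ 'n ^ 'm \<Rightarrow> (complex ^ 'm) set" where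
  "col_space A = range (\<lambda>x. A *v x)"

definition null_space :: "complex ^ 'n ^ 'm \<Rightarrow> (complex ^ 'n) set" where
  "null_space A = {x. A *v x = 0}"

definition cinner :: "complex ^ 'n \<Rightarrow> complex ^ 'n \<Rightarrow> complex" where
  "cinner x y = (\<Sum>i\<in>UNIV. x $ i * cnj (y $ i))"

definition cperp :: "(complex ^ 'n) set \<Rightarrow> (complex ^ 'n) set" where
  "cperp S = {x. \<forall>s\<in>S. cinner x s = 0}"

definition subspace_sum :: "(complex ^ 'n) set \<Rightarrow> (complex ^ 'n) set \<Rightarrow> (complex ^ 'n) set" where
  "subspace_sum A B = {a + b | a b. a \<in> A \<and> b \<in> B}"

definition is_direct_sum :: "(complex ^ 'n) set \<Rightarrow> (complex ^ 'n) set \<Rightarrow> (complex ^ 'n) set \<Rightarrow> bool" where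
  "is_direct_sum C A B \<longleftrightarrow> C = subspace_sum A B \<and> A \<inter> B = {0}"

end

theory Submission imports Defs begin


lemma ctrans_ctrans[simp]: "ctrans (ctrans A) = A"
  by (simp add: ctrans_def vec_eq_iff)

lemma ctrans_mult: "ctrans (A ** B) = ctrans B ** ctrans A"
  by (simp add: ctrans_def vec_eq_iff matrix_matrix_mult_def mult.commute)

lemma ctrans_nth[simp]: "ctrans A $ i $ j = cnj (A $ j $ i)"
  by (simp add: ctrans_def)

lemma cinner_adj: "cinner (A *v x) y = cinner x (ctrans A *v y)"
  unfolding cinner_def matrix_vector_mult_def
  by (simp add: sum_distrib_right sum_distrib_left mult_ac ctrans_def)
     (rule sum.swap)

lemma cinner_adj2: "cinner x (A *v y) = cinner (ctrans A *v x) y"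
  using cinner_adj[of "ctrans A" x y] by simp

lemma cinner_self_Re: "Re (cinner x x) = (\<Sum>i\<in>UNIV. (cmod (x $ i))^2)"
  unfolding cinner_def by (simp add: Re_sum flip: complex_norm_square)

lemma cinner_self_eq0: "cinner x x = 0 \<longleftrightarrow> x = 0"
proof
  assume h: "cinner x x = 0"
  hence "(\<Sum>i\<in>UNIV. (cmod (x $ i))^2) = 0" using cinner_self_Re[of x] by simp
  hence "\<forall>i\<in>UNIV. (cmod (x $ i))^2 = 0" by (subst (asm) sum_nonneg_eq_0_iff) auto
  thus "x = 0" by (simp add: vec_eq_iff)
qed (simp add: cinner_def)

lemma inner_Re_cinner: "inner x y = Re (cinner x y)"
  unfolding inner_vec_def cinner_def inner_complex_def by (simp add: Re_sum)

lemma cinner_add_left: "cinner (x + y) z = cinner x z + cinner y z"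
  unfolding cinner_def by (simp add: distrib_right sum.distrib)
lemma cinner_diff_left: "cinner (x - y) z = cinner x z - cinner y z"
  unfolding cinner_def by (simp add: left_diff_distrib sum_subtractf)
lemma cinner_add_right: "cinner z (x + y) = cinner z x + cinner z y"
  unfolding cinner_def by (simp add: distrib_left sum.distrib)
lemma cinner_diff_right: "cinner z (x - y) = cinner z x - cinner z y"
  unfolding cinner_def by (simp add: right_diff_distrib sum_subtractf)
lemma cinner_zero[simp]: "cinner 0 x = 0" "cinner x 0 = 0"
  unfolding cinner_def by simp_all
lemma cinner_commute: "cinner y x = cnj (cinner x y)"
  unfolding cinner_def by (simp add: mult.commute)


lemma cinner_self_Re_eq0: "Re (cinner x x) = 0 \<longleftrightarrow> x = 0"
proof
  assume h: "Re (cinner x x) = 0"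
  hence "(\<Sum>i\<in>UNIV. (cmod (x $ i))^2) = 0" using cinner_self_Re[of x] by simp
  hence "\<forall>i\<in>UNIV. (cmod (x $ i))^2 = 0" by (subst (asm) sum_nonneg_eq_0_iff) auto
  thus "x = 0" by (simp add: vec_eq_iff)
qed (simp add: cinner_def)

lemma range_col:
  fixes A :: "complex^'n^'m"
  shows "\<exists>z. (ctrans A ** A) *v z = ctrans A *v v"
proof -
  define M where "M = ctrans A ** A"
  define S where "S = range (\<lambda>x. M *v x)"
  have "subspace S" unfolding S_def
    by (rule linear_subspace_image[OF matrix_vector_mul_linear subspace_UNIV])
  hence spS: "span S = S" by (simp add: span_eq_iff)
  define y where "y = ctrans A *v v"
  obtain s t where s: "s \<in> span S" and o: "\<And>w. w \<in> span S \<Longrightarrow> orthogonal t w" and yst: "y = s + t"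
    using orthogonal_subspace_decomp_exists[of S y] by blast
  have "M *v t \<in> S" unfolding S_def by simp
  hence "M *v t \<in> span S" by (rule span_base)
  hence "inner t (M *v t) = 0" using o by (simp add: orthogonal_def)
  moreover have "inner t (M *v t) = Re (cinner (A *v t) (A *v t))"
    unfolding inner_Re_cinner M_def matrix_vector_mul_assoc[symmetric]
    using cinner_adj2[of t "ctrans A" "A *v t"] by simp
  ultimately have At: "A *v t = 0" using cinner_self_Re_eq0 by metis
  have "inner t y = Re (cinner (A *v t) v)"
    unfolding inner_Re_cinner y_def using cinner_adj2[of t "ctrans A" v] by simp
  hence ty: "inner t y = 0" using At by simp
  have "inner t s = 0" using o[OF s] by (simp add: orthogonal_def)
  hence "inner t t = 0" using ty yst by (simp add: inner_add_right)
  hence "t = 0" by simp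
  hence "y \<in> S" using yst s spS by simp
  thus ?thesis unfolding S_def y_def M_def by auto
qed

lemma ex_Z:
  fixes A :: "complex^'n^'m"
  shows "\<exists>Z. ctrans A ** A ** Z = ctrans A"
proof -
  have "\<forall>j. \<exists>z. (ctrans A ** A) *v z = ctrans A *v axis j 1" using range_col by blast
  then obtain zf where zf: "\<And>j. (ctrans A ** A) *v zf j = ctrans A *v axis j 1" by metis
  define Z where "Z = (\<chi> i j. zf j $ i)"
  have "ctrans A ** A ** Z = ctrans A"
  proof (rule vec_eq_iff[THEN iffD2], rule allI, rule vec_eq_iff[THEN iffD2], rule allI)
    fix i j
    have "(ctrans A ** A ** Z) $ i $ j = ((ctrans A ** A) *v zf j) $ i"
      by (simp add: matrix_matrix_mult_def matrix_vector_mult_def Z_def)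
    also have "\<dots> = (ctrans A *v axis j 1) $ i" by (simp add: zf)
    also have "\<dots> = ctrans A $ i $ j"
      by (simp add: matrix_vector_mult_def axis_def if_distrib cong: if_cong)
    finally show "(ctrans A ** A ** Z) $ i $ j = ctrans A $ i $ j" .
  qed
  thus ?thesis by blast
qed

lemma mp_exists:
  fixes A :: "complex^'n^'m"
  shows "\<exists>X. is_mp_inverse A X"
proof -
  obtain Z where Z: "ctrans A ** A ** Z = ctrans A" using ex_Z by blast
  obtain W where W: "A ** ctrans A ** W = A" using ex_Z[of "ctrans A"] by auto
  define P where "P = A ** Z"
  define Q where "Q = ctrans A ** W"
  have Z': "ctrans Z ** ctrans A ** A = A"
    using arg_cong[OF Z, of ctrans] by (simp add: ctrans_mult matrix_mul_assoc)
  have W': "ctrans W ** A ** ctrans A = ctrans A"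
    using arg_cong[OF W, of ctrans] by (simp add: ctrans_mult matrix_mul_assoc)
  have PP: "ctrans Z ** ctrans A ** P = P" unfolding P_def using Z' by (simp add: matrix_mul_assoc)
  have Ph: "ctrans P = P"
  proof -
    have "ctrans (ctrans Z ** ctrans A ** P) = ctrans Z ** ctrans A ** P"
      unfolding P_def by (simp add: ctrans_mult matrix_mul_assoc)
    thus ?thesis using PP by simp
  qed
  have PA: "P ** A = A"
  proof -
    have "P ** A = ctrans P ** A" using Ph by simp
    also have "\<dots> = A" unfolding P_def using Z' by (simp add: ctrans_mult matrix_mul_assoc)
    finally show ?thesis .
  qed
  have QQ: "ctrans W ** A ** Q = Q" unfolding Q_def using W' by (simp add: matrix_mul_assoc)
  have Qh: "ctrans Q = Q"
  proof -
    have "ctrans (ctrans W ** A ** Q) = ctrans W ** A ** Q"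
      unfolding Q_def by (simp add: ctrans_mult matrix_mul_assoc)
    thus ?thesis using QQ by simp
  qed
  have Qc: "ctrans W ** A = Q" using Qh unfolding Q_def by (simp add: ctrans_mult)
  have AQ: "A ** Q = A"
  proof -
    have "Q ** ctrans A = ctrans A" using W' Qc by (simp add: matrix_mul_assoc)
    hence "ctrans (Q ** ctrans A) = A" by simp
    thus ?thesis using Qh by (simp add: ctrans_mult)
  qed
  have QQ2: "Q ** Q = Q" using QQ Qc by simp
  have AZA: "A ** Z ** A = A" using PA P_def by simp
  define X where "X = Q ** Z ** P"
  have AX: "A ** X = P"
  proof -
    have "A ** X = (A ** Q) ** Z ** P" unfolding X_def by (simp add: matrix_mul_assoc)
    also have "\<dots> = P ** P" using AQ P_def by simp
    also have "\<dots> = P" using PP Ph PA by (metis P_def matrix_mul_assoc)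
    finally show ?thesis .
  qed
  have XA: "X ** A = Q"
  proof -
    have "X ** A = Q ** Z ** (P ** A)" unfolding X_def by (simp add: matrix_mul_assoc)
    also have "\<dots> = ctrans W ** (A ** Z ** A)" using PA Qc by (simp add: matrix_mul_assoc)
    also have "\<dots> = Q" using AZA Qc by simp
    finally show ?thesis .
  qed
  have "is_mp_inverse A X"
    unfolding is_mp_inverse_def
  proof (intro conjI)
    show "A ** X ** A = A" using AX PA by simp
    show "X ** A ** X = X" using XA QQ2 unfolding X_def by (simp add: matrix_mul_assoc)
    show "ctrans (A ** X) = A ** X" using AX Ph by simp
    show "ctrans (X ** A) = X ** A" using XA Qh by simp
  qed
  thus ?thesis by blast
qed

lemma mp_unique:
  assumes "is_mp_inverse A X" "is_mp_inverse A Y"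
  shows "X = Y"
proof -
  have a: "A ** X ** A = A" "X ** A ** X = X" "ctrans (A ** X) = A ** X" "ctrans (X ** A) = X ** A"
    using assms(1) by (auto simp: is_mp_inverse_def)
  have b: "A ** Y ** A = A" "Y ** A ** Y = Y" "ctrans (A ** Y) = A ** Y" "ctrans (Y ** A) = Y ** A"
    using assms(2) by (auto simp: is_mp_inverse_def)
  have AX: "A ** X = A ** Y ** A ** X"
    using b(1) by (simp add: matrix_mul_assoc)
  have "A ** Y ** A ** X = ctrans (A ** Y) ** ctrans (A ** X)" using a(3) b(3) by (simp add: matrix_mul_assoc)
  also have "\<dots> = ctrans (A ** X ** A ** Y)" by (simp add: ctrans_mult matrix_mul_assoc)
  also have "\<dots> = ctrans (A ** Y)" using a(1) by simp
  also have "\<dots> = A ** Y" using b(3) .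
  finally have AXY: "A ** X = A ** Y" using AX by simp
  have XA: "X ** A = Y ** A ** X ** A"
  proof -
    have "X ** A = ctrans (X ** A)" using a(4) by simp
    also have "\<dots> = ctrans (X ** (A ** Y ** A))" using b(1) by simp
    also have "\<dots> = ctrans (Y ** A) ** ctrans (X ** A)" by (simp add: ctrans_mult matrix_mul_assoc)
    also have "\<dots> = Y ** A ** X ** A" using a(4) b(4) by (simp add: matrix_mul_assoc)
    finally show ?thesis .
  qed
  hence XAY: "X ** A = Y ** A" using a(1) by (metis matrix_mul_assoc)
  have "X = X ** A ** X" using a(2) by simp
  also have "\<dots> = Y ** A ** Y" using XAY AXY by (metis matrix_mul_assoc)
  also have "\<dots> = Y" using b(2) .
  finally show ?thesis .
qed

lemma mp_inv: "is_mp_inverse A (mp_inv A)"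
  unfolding mp_inv_def using mp_exists[of A] mp_unique[of A] by (metis theI)


lemma mp_eqs:
  "A ** mp_inv A ** A = A" "mp_inv A ** A ** mp_inv A = mp_inv A"
  "ctrans (A ** mp_inv A) = A ** mp_inv A" "ctrans (mp_inv A ** A) = mp_inv A ** A"
  using mp_inv[of A] by (auto simp: is_mp_inverse_def)

lemma mp_ctrans: "mp_inv (ctrans A) = ctrans (mp_inv A)"
proof -
  have "is_mp_inverse (ctrans A) (ctrans (mp_inv A))"
    unfolding is_mp_inverse_def using mp_eqs[of A]
    by (metis ctrans_ctrans ctrans_mult matrix_mul_assoc)
  thus ?thesis using mp_unique mp_inv by blast
qed

lemma null_AstarA: "(ctrans A ** A) *v x = 0 \<Longrightarrow> A *v x = 0"
proof -
  assume h: "(ctrans A ** A) *v x = 0"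
  have "cinner (A *v x) (A *v x) = cinner x ((ctrans A ** A) *v x)"
    by (simp add: cinner_adj matrix_vector_mul_assoc)
  thus ?thesis using h cinner_self_eq0 by (metis cinner_zero(2))
qed

lemma range_perp:
  fixes B :: "complex^'n^'m"
  assumes "\<And>n. ctrans B *v n = 0 \<Longrightarrow> cinner x n = 0"
  shows "\<exists>y. x = B *v y"
proof -
  define X where "X = mp_inv B"
  define d where "d = x - B *v (X *v x)"
  have "ctrans B *v d = ctrans B *v x - (ctrans B ** ctrans (B ** X)) *v x"
    unfolding d_def X_def using mp_eqs(3)[of B]
    by (simp add: matrix_vector_mult_diff_distrib matrix_vector_mul_assoc)
  also have "ctrans B ** ctrans (B ** X) = ctrans (B ** X ** B)"
    by (simp add: ctrans_mult matrix_mul_assoc)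
  also have "\<dots> = ctrans B" unfolding X_def using mp_eqs(1)[of B] by simp
  finally have Bd: "ctrans B *v d = 0" by simp
  have "cinner x d = 0" using assms Bd by simp
  moreover have "cinner (B *v (X *v x)) d = 0" using Bd by (simp add: cinner_adj)
  moreover have "cinner d d = cinner x d - cinner (B *v (X *v x)) d"
    using cinner_diff_left[of x "B *v (X *v x)" d] d_def by metis
  ultimately have "cinner d d = 0" by simp
  hence "d = 0" using cinner_self_eq0 by metis
  thus ?thesis unfolding d_def by auto
qed

lemma cancel_AAstar:
  fixes A :: "complex^'k^'n" and B C :: "complex^'n^'m"
  assumes "B ** A ** ctrans A = C ** A ** ctrans A"
  shows "B ** A = C ** A"
proof -
  have "\<And>y. ctrans A *v (ctrans B *v y) = ctrans A *v (ctrans C *v y)"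
  proof -
    fix y
    define d where "d = ctrans B *v y - ctrans C *v y"
    have "ctrans (B ** A ** ctrans A) = ctrans (C ** A ** ctrans A)" using assms by simp
    hence e: "A ** ctrans A ** ctrans B = A ** ctrans A ** ctrans C"
      by (simp add: ctrans_mult matrix_mul_assoc)
    have "(ctrans (ctrans A) ** ctrans A) *v d = 0"
      unfolding d_def using e
      by (simp add: matrix_vector_mult_diff_distrib matrix_vector_mul_assoc)
    hence "ctrans A *v d = 0" by (rule null_AstarA)
    thus "ctrans A *v (ctrans B *v y) = ctrans A *v (ctrans C *v y)"
      unfolding d_def by (simp add: matrix_vector_mult_diff_distrib)
  qed
  hence "ctrans A ** ctrans B = ctrans A ** ctrans C"
    by (simp add: matrix_eq matrix_vector_mul_assoc)
  hence "ctrans (ctrans A ** ctrans B) = ctrans (ctrans A ** ctrans C)" by simp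
  thus ?thesis by (simp add: ctrans_mult)
qed

lemma col_sub: "B = A ** C \<Longrightarrow> col_space B \<subseteq> col_space A"
  unfolding col_space_def by (auto simp: matrix_vector_mul_assoc[symmetric])

lemma null_sub: "B = C ** A \<Longrightarrow> null_space A \<subseteq> null_space B"
  unfolding null_space_def by (auto simp: matrix_vector_mul_assoc[symmetric])

lemma herm_mp_comm:
  assumes "ctrans P = P"
  shows "P ** mp_inv P = mp_inv P ** P"
proof -
  have "mp_inv P ** P = ctrans (mp_inv P ** P)" using mp_eqs(4)[of P] by simp
  also have "\<dots> = P ** ctrans (mp_inv P)" using assms by (simp add: ctrans_mult)
  also have "ctrans (mp_inv P) = mp_inv P" using mp_ctrans[of P] assms by simp
  finally show ?thesis by simp
qed


lemma part4:
  fixes U :: "complex ^ 'p ^ 'm" and V :: "complex ^ 'm ^ 'q"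
  shows "col_space (U ** ctrans U ** ctrans V) =
           col_space U \<inter> cperp ((\<lambda>x. mp_inv (U ** ctrans U) *v x) ` (col_space U \<inter> null_space V))"
proof -
  define P where "P = U ** ctrans U"
  define Pi where "Pi = mp_inv P"
  have Ph: "ctrans P = P" unfolding P_def by (simp add: ctrans_mult)
  have comm: "P ** Pi = Pi ** P" unfolding Pi_def using herm_mp_comm[OF Ph] .
  have PPh: "ctrans (P ** Pi) = P ** Pi" unfolding Pi_def by (rule mp_eqs(3))
  have PPU0: "P ** Pi ** U = mat 1 ** U"
  proof (rule cancel_AAstar)
    show "P ** Pi ** U ** ctrans U = mat 1 ** U ** ctrans U"
      using mp_eqs(1)[of P] unfolding Pi_def P_def by (simp add: matrix_mul_assoc)
  qed
  hence PPU: "P ** Pi ** U = U" by simp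
  have PPx: "(P ** Pi) *v x = x" if hx: "x \<in> col_space U" for x
  proof -
    obtain w where "x = U *v w" using hx by (auto simp: col_space_def)
    thus ?thesis using PPU by (simp add: matrix_vector_mul_assoc)
  qed
  show ?thesis
  proof
    show "col_space (U ** ctrans U ** ctrans V) \<subseteq>
      col_space U \<inter> cperp ((\<lambda>x. mp_inv (U ** ctrans U) *v x) ` (col_space U \<inter> null_space V))"
    proof
      fix x assume "x \<in> col_space (U ** ctrans U ** ctrans V)"
      then obtain y where xy: "x = (P ** ctrans V) *v y" unfolding col_space_def P_def by auto
      have "x \<in> col_space U" using xy unfolding col_space_def P_def
        by (auto simp: matrix_vector_mul_assoc[symmetric])
      moreover have "cinner x (Pi *v z) = 0" if z: "z \<in> col_space U" "z \<in> null_space V" for z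
      proof -
        have "cinner x (Pi *v z) = cinner (ctrans V *v y) ((ctrans P ** Pi) *v z)"
          unfolding xy by (simp add: cinner_adj matrix_vector_mul_assoc[symmetric])
        also have "\<dots> = cinner (ctrans V *v y) z" using Ph PPx[OF z(1)] by simp
        also have "\<dots> = cinner y (V *v z)" by (simp add: cinner_adj)
        also have "\<dots> = 0" using z(2) unfolding null_space_def by simp
        finally show ?thesis .
      qed
      ultimately show "x \<in> col_space U \<inter> cperp ((\<lambda>x. mp_inv (U ** ctrans U) *v x) ` (col_space U \<inter> null_space V))"
        unfolding cperp_def Pi_def P_def by auto
    qed
  next
    show "col_space U \<inter> cperp ((\<lambda>x. mp_inv (U ** ctrans U) *v x) ` (col_space U \<inter> null_space V))
      \<subseteq> col_space (U ** ctrans U ** ctrans V)"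
    proof
      fix x assume x: "x \<in> col_space U \<inter> cperp ((\<lambda>x. mp_inv (U ** ctrans U) *v x) ` (col_space U \<inter> null_space V))"
      hence xU: "x \<in> col_space U" and xp: "\<And>z. z \<in> col_space U \<Longrightarrow> z \<in> null_space V \<Longrightarrow> cinner x (Pi *v z) = 0"
        unfolding cperp_def Pi_def P_def by auto
      have "\<exists>y. x = (P ** ctrans V) *v y"
      proof (rule range_perp)
        fix n assume n: "ctrans (P ** ctrans V) *v n = 0"
        hence Vn: "(V ** P) *v n = 0" using Ph by (simp add: ctrans_mult)
        define z where "z = P *v n"
        have z1: "z \<in> col_space U" unfolding z_def P_def col_space_def
          by (auto simp: matrix_vector_mul_assoc[symmetric])
        have z2: "z \<in> null_space V" unfolding z_def null_space_def using Vn
          by (simp add: matrix_vector_mul_assoc)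
        have "cinner x n = cinner ((P ** Pi) *v x) n" using PPx[OF xU] by simp
        also have "\<dots> = cinner x ((P ** Pi) *v n)" using PPh by (simp add: cinner_adj)
        also have "\<dots> = cinner x (Pi *v z)" unfolding z_def comm by (simp add: matrix_vector_mul_assoc)
        also have "\<dots> = 0" using xp[OF z1 z2] .
        finally show "cinner x n = 0" .
      qed
      thus "x \<in> col_space (U ** ctrans U ** ctrans V)" unfolding col_space_def P_def by auto
    qed
  qed
qed

lemma part7:
  fixes U :: "complex ^ 'p ^ 'm" and V :: "complex ^ 'm ^ 'q"
  shows "is_direct_sum (null_space (ctrans U ** ctrans V ** V)) (null_space V)
           ((\<lambda>x. mp_inv (ctrans V ** V) *v x) ` cperp (subspace_sum (col_space U) (null_space V)))"
proof -
  define G where "G = ctrans V ** V"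
  define H where "H = mp_inv G"
  have Gh: "ctrans G = G" unfolding G_def by (simp add: ctrans_mult)
  have GHG: "G ** H ** G = G" unfolding H_def by (rule mp_eqs(1))
  have HGh: "ctrans (H ** G) = H ** G" unfolding H_def by (rule mp_eqs(4))
  have GV: "G *v x = 0 \<longleftrightarrow> V *v x = 0" for x
    using null_AstarA[of V x] unfolding G_def by (auto simp: matrix_vector_mul_assoc[symmetric])
  define S where "S = cperp (subspace_sum (col_space U) (null_space V))"
  have SU: "cinner s (U *v w) = 0" if "s \<in> S" for s w
  proof -
    have "U *v w + 0 \<in> subspace_sum (col_space U) (null_space V)"
      unfolding subspace_sum_def col_space_def null_space_def using matrix_vector_mult_0_right by blast
    thus ?thesis using that unfolding S_def cperp_def by auto
  qed
  have SV: "cinner s n = 0" if "s \<in> S" "V *v n = 0" for s n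
  proof -
    have "0 + n \<in> subspace_sum (col_space U) (null_space V)"
      unfolding subspace_sum_def col_space_def null_space_def using that(2)
      by (metis (mono_tags, lifting) matrix_vector_mult_0_right mem_Collect_eq rangeI)
    thus ?thesis using that unfolding S_def cperp_def by auto
  qed
  have SG: "\<exists>t. s = G *v t" if "s \<in> S" for s
    using range_perp[of G s] SV[OF that] Gh GV by metis
  have sum: "null_space (ctrans U ** ctrans V ** V) = subspace_sum (null_space V) ((\<lambda>x. H *v x) ` S)"
  proof
    show "null_space (ctrans U ** ctrans V ** V) \<subseteq> subspace_sum (null_space V) ((\<lambda>x. H *v x) ` S)"
    proof
      fix x assume "x \<in> null_space (ctrans U ** ctrans V ** V)"
      hence x: "ctrans U *v (G *v x) = 0" unfolding null_space_def G_def
        by (simp add: matrix_vector_mul_assoc matrix_mul_assoc)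
      have "G *v (x - H *v (G *v x)) = 0"
        using GHG by (simp add: matrix_vector_mult_diff_distrib matrix_vector_mul_assoc matrix_mul_assoc)
      hence n: "x - H *v (G *v x) \<in> null_space V" unfolding null_space_def using GV by simp
      have "G *v x \<in> S" unfolding S_def cperp_def
      proof (clarify)
        fix s assume "s \<in> subspace_sum (col_space U) (null_space V)"
        then obtain w b where s: "s = U *v w + b" "V *v b = 0"
          unfolding subspace_sum_def col_space_def null_space_def by auto
        have "cinner (G *v x) (U *v w) = cinner (ctrans U *v (G *v x)) w"
          by (simp add: cinner_adj2)
        moreover have "cinner (G *v x) b = cinner (V *v x) (V *v b)"
          unfolding G_def by (simp add: matrix_vector_mul_assoc[symmetric] cinner_adj)
        ultimately show "cinner (G *v x) s = 0" using s x by (simp add: cinner_add_right)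
      qed
      moreover have "x = (x - H *v (G *v x)) + H *v (G *v x)" by simp
      ultimately show "x \<in> subspace_sum (null_space V) ((\<lambda>x. H *v x) ` S)"
        unfolding subspace_sum_def using n by blast
    qed
  next
    show "subspace_sum (null_space V) ((\<lambda>x. H *v x) ` S) \<subseteq> null_space (ctrans U ** ctrans V ** V)"
    proof
      fix x assume "x \<in> subspace_sum (null_space V) ((\<lambda>x. H *v x) ` S)"
      then obtain n s where xs: "x = n + H *v s" "V *v n = 0" "s \<in> S"
        unfolding subspace_sum_def null_space_def by auto
      obtain t where t: "s = G *v t" using SG[OF xs(3)] by blast
      have Gn: "G *v n = 0" using GV xs(2) by simp
      have "G *v x = G *v (H *v (G *v t))" using Gn xs(1) t by (simp add: matrix_vector_right_distrib)
      also have "\<dots> = s" using GHG t by (simp add: matrix_vector_mul_assoc matrix_mul_assoc)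
      finally have Gx: "G *v x = s" .
      have "cinner (ctrans U *v s) (ctrans U *v s) = cinner s (U *v (ctrans U *v s))"
        by (simp add: cinner_adj2)
      also have "\<dots> = 0" using SU[OF xs(3)] .
      finally have "ctrans U *v s = 0" using cinner_self_eq0 by metis
      moreover have "(ctrans U ** ctrans V ** V) *v x = ctrans U *v (G *v x)"
        unfolding G_def by (simp add: matrix_vector_mul_assoc matrix_mul_assoc)
      ultimately show "x \<in> null_space (ctrans U ** ctrans V ** V)" unfolding null_space_def using Gx
        by simp
    qed
  qed
  have int: "null_space V \<inter> (\<lambda>x. H *v x) ` S = {0}"
  proof
    show "null_space V \<inter> (\<lambda>x. H *v x) ` S \<subseteq> {0}"
    proof
      fix x assume "x \<in> null_space V \<inter> (\<lambda>x. H *v x) ` S"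
      then obtain s where xs: "V *v x = 0" "s \<in> S" "x = H *v s" unfolding null_space_def by auto
      obtain t where t: "s = G *v t" using SG[OF xs(2)] by blast
      have "cinner x x = cinner ((H ** G) *v t) x" using xs(3) t by (simp add: matrix_vector_mul_assoc)
      also have "\<dots> = cinner t ((H ** G) *v x)" using HGh by (simp add: cinner_adj)
      also have "\<dots> = 0" using GV[of x] xs(1) by (simp add: matrix_vector_mul_assoc[symmetric])
      finally show "x \<in> {0}" using cinner_self_eq0 by (metis singletonI)
    qed
  next
    have "(0::complex^'m) \<in> S" unfolding S_def cperp_def by simp
    hence "H *v 0 \<in> (\<lambda>x. H *v x) ` S" by blast
    thus "{0} \<subseteq> null_space V \<inter> (\<lambda>x. H *v x) ` S" unfolding null_space_def by simp
  qed
  show ?thesis unfolding is_direct_sum_def using sum int unfolding S_def H_def G_def by simp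
qed


theorem theorem2:
  fixes U :: "complex ^ 'p ^ 'm" and V :: "complex ^ 'm ^ 'q"
  defines "E \<equiv> U ** mp_inv (V ** U) ** V"
  shows "E ** E = E
    \<and> col_space E = col_space (U ** ctrans U ** ctrans V)
    \<and> col_space (U ** ctrans U ** ctrans V) = col_space (U ** ctrans U ** ctrans V ** V)
    \<and> col_space (U ** ctrans U ** ctrans V ** V) =
           col_space U \<inter> cperp ((\<lambda>x. mp_inv (U ** ctrans U) *v x) ` (col_space U \<inter> null_space V))
    \<and> null_space E = null_space (ctrans U ** ctrans V ** V)
    \<and> null_space (ctrans U ** ctrans V ** V) = null_space (U ** ctrans U ** ctrans V ** V)
    \<and> is_direct_sum (null_space (U ** ctrans U ** ctrans V ** V)) (null_space V)
           ((\<lambda>x. mp_inv (ctrans V ** V) *v x) ` cperp (subspace_sum (col_space U) (null_space V)))"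
proof -
  define W where "W = V ** U"
  define Wi where "Wi = mp_inv W"
  have EW: "E = U ** Wi ** V" unfolding E_def Wi_def W_def ..
  have W1: "W ** Wi ** W = W" and W2: "Wi ** W ** Wi = Wi"
    and W3: "ctrans (W ** Wi) = W ** Wi" and W4: "ctrans (Wi ** W) = Wi ** W"
    unfolding Wi_def by (rule mp_eqs)+
  have Wc: "ctrans W = ctrans U ** ctrans V" unfolding W_def by (simp add: ctrans_mult)
  have EE: "E ** E = E"
  proof -
    have "E ** E = U ** (Wi ** W ** Wi) ** V" unfolding EW W_def by (simp add: matrix_mul_assoc)
    thus ?thesis using W2 EW by simp
  qed
  have Wi_a: "Wi = ctrans W ** ctrans Wi ** Wi"
  proof -
    have "Wi = (Wi ** W) ** Wi" using W2 by simp
    also have "\<dots> = ctrans (Wi ** W) ** Wi" using W4 by simp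
    finally show ?thesis by (simp add: ctrans_mult)
  qed
  have Wc_a: "ctrans W = Wi ** W ** ctrans W"
  proof -
    have "ctrans W = ctrans (W ** (Wi ** W))" using W1 by (simp add: matrix_mul_assoc)
    also have "\<dots> = ctrans (Wi ** W) ** ctrans W" by (simp add: ctrans_mult)
    finally show ?thesis using W4 by simp
  qed
  have c2: "col_space E = col_space (U ** ctrans U ** ctrans V)"
  proof
    have "E = (U ** ctrans U ** ctrans V) ** (ctrans Wi ** Wi ** V)"
      unfolding EW using Wi_a Wc by (metis matrix_mul_assoc)
    thus "col_space E \<subseteq> col_space (U ** ctrans U ** ctrans V)" by (rule col_sub)
    have "U ** ctrans U ** ctrans V = U ** ctrans W" using Wc by (simp add: matrix_mul_assoc)
    also have "\<dots> = U ** Wi ** W ** ctrans W" using Wc_a by (metis matrix_mul_assoc)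
    also have "\<dots> = E ** (U ** ctrans W)" unfolding EW W_def by (simp add: matrix_mul_assoc)
    finally show "col_space (U ** ctrans U ** ctrans V) \<subseteq> col_space E" by (rule col_sub)
  qed
  have c3: "col_space (U ** ctrans U ** ctrans V) = col_space (U ** ctrans U ** ctrans V ** V)"
  proof
    have "ctrans V = ctrans ((V ** mp_inv V) ** V)" using mp_eqs(1)[of V] by simp
    also have "\<dots> = ctrans V ** (V ** mp_inv V)" using mp_eqs(3)[of V] by (simp add: ctrans_mult)
    finally have "U ** ctrans U ** ctrans V = (U ** ctrans U ** ctrans V ** V) ** mp_inv V"
      by (metis matrix_mul_assoc)
    thus "col_space (U ** ctrans U ** ctrans V) \<subseteq> col_space (U ** ctrans U ** ctrans V ** V)"
      by (rule col_sub)
    show "col_space (U ** ctrans U ** ctrans V ** V) \<subseteq> col_space (U ** ctrans U ** ctrans V)"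
      by (rule col_sub) simp
  qed
  have n5: "null_space E = null_space (ctrans U ** ctrans V ** V)"
  proof
    have Wi_b: "Wi = Wi ** ctrans Wi ** ctrans W"
    proof -
      have "Wi = Wi ** (W ** Wi)" using W2 by (simp add: matrix_mul_assoc)
      also have "\<dots> = Wi ** ctrans (W ** Wi)" using W3 by simp
      finally show ?thesis by (simp add: ctrans_mult matrix_mul_assoc)
    qed
    have "E = (U ** Wi ** ctrans Wi) ** (ctrans U ** ctrans V ** V)"
      unfolding EW using Wi_b Wc by (metis matrix_mul_assoc)
    thus "null_space (ctrans U ** ctrans V ** V) \<subseteq> null_space E" by (rule null_sub)
    have Wc_b: "ctrans W = ctrans W ** W ** Wi"
    proof -
      have "ctrans W = ctrans ((W ** Wi) ** W)" using W1 by simp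
      also have "\<dots> = ctrans W ** ctrans (W ** Wi)" by (simp add: ctrans_mult)
      finally show ?thesis using W3 by (simp add: matrix_mul_assoc)
    qed
    have "ctrans U ** ctrans V ** V = ctrans W ** V" using Wc by simp
    also have "\<dots> = ctrans W ** W ** Wi ** V" using Wc_b by metis
    also have "\<dots> = (ctrans W ** V) ** E" unfolding EW W_def by (simp add: matrix_mul_assoc)
    finally show "null_space E \<subseteq> null_space (ctrans U ** ctrans V ** V)" by (rule null_sub)
  qed
  have n6: "null_space (ctrans U ** ctrans V ** V) = null_space (U ** ctrans U ** ctrans V ** V)"
  proof
    show "null_space (ctrans U ** ctrans V ** V) \<subseteq> null_space (U ** ctrans U ** ctrans V ** V)"
      by (rule null_sub) (simp add: matrix_mul_assoc)
    show "null_space (U ** ctrans U ** ctrans V ** V) \<subseteq> null_space (ctrans U ** ctrans V ** V)"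
    proof
      fix x assume "x \<in> null_space (U ** ctrans U ** ctrans V ** V)"
      hence "(ctrans (ctrans U) ** ctrans U) *v ((ctrans V ** V) *v x) = 0"
        unfolding null_space_def by (simp add: matrix_vector_mul_assoc matrix_mul_assoc)
      hence "ctrans U *v ((ctrans V ** V) *v x) = 0" by (rule null_AstarA)
      thus "x \<in> null_space (ctrans U ** ctrans V ** V)"
        unfolding null_space_def by (simp add: matrix_vector_mul_assoc matrix_mul_assoc)
    qed
  qed
  show ?thesis
    using EE c2 c3 part4[of U V] n5 n6 part7[of U V] by simp
qed

end
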